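(* Let $A\in\mathcal C$, let $U$ be an independent subset of $A$ and $V$ an independent subset of $T$, and let $f:{\rm desc}(U)\to{\rm desc}(V)$ be an isomorphism. Let $Q$ be the set of $q$-element subsets $p\subseteq U$ such that $p$ has a common predecessor in $A$ and $f(p)$ has a common predecessor in $T$. For $p\in Q$ let $w_p$ be a common predecessor of $p$ in $A$ and $w_{f(p)}$ a common predecessor of $f(p)$ in $T$. Put $U'=(U\setminus\bigcup Q)\cup\{w_p: p\in Q\}$ and $V'=(V\setminus\bigcup_{p\in Q}f(p))\cup\{w_{f(p)}:p\in Q\}$. Then: (a) $U'$ and $V'$ are independent subsets of $A$ and $T$ respectively, and the extension $F$ of $f$ which maps $w_p$ to $w_{f(p)}$ for each $p\in Q$ is an isomorphism from ${\rm desc}(U')$ to ${\rm desc}(V')$; (b) if $I\subseteq A$ is disjoint from $U$ and $U\cup I$ is an independent subset of $A$, then $U'\cup I$ is also independent.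
   Context: Fix an integer $q\ge2$; $T=T_q$ is the digraph whose vertices are finite sequences over $\{0,\ldots,q-1\}$ with edges $(\bar w,\bar wi)$. For a digraph, an $s$-arc ($s\ge0$) from $u_0$ to $u_s$ is a sequence $u_0\ldots u_s$ with each $(u_i,u_{i+1})$ an edge and $u_{i-1}\ne u_{i+1}$ for $0<i<s$; ${\rm desc}(u)$ is the set of vertices reachable from $u$ by some $s$-arc, $s\ge0$ (including $u$), and ${\rm desc}(Y)=\bigcup_{y\in Y}{\rm desc}(y)$; descendant sets are considered as induced subdigraphs. A descendant-closed set $B$ is finitely generated if $B={\rm desc}(Z)$ for a finite $Z$. A subset is independent if the descendant sets of any two distinct members are disjoint. A common predecessor of a set $X$ of vertices is a vertex $a$ with $(a,x)$ an edge for all $x\in X$. $\mathcal C$ is the class of digraphs $A$ such that ${\rm desc}(a)\cong T$ for every $a\in A$, $A={\rm desc}(Z)$ for some finite $Z$, and ${\rm desc}(a)\cap{\rm desc}(b)$ is finitely generated for all $a,b\in A$. *)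

theory Defs
  imports Main
begin

definition T_verts :: "nat \<Rightarrow> nat list set" where
  "T_verts q = {w. set w \<subseteq> {0..<q}}"

definition T_edges :: "nat \<Rightarrow> (nat list \<times> nat list) set" where
  "T_edges q = {(w, w @ [i]) | w i. w \<in> T_verts q \<and> i < q}"

definition is_arc :: "('a \<times> 'a) set \<Rightarrow> 'a list \<Rightarrow> bool" where
  "is_arc E us \<longleftrightarrow> us \<noteq> [] \<and>
     (\<forall>i. Suc i < length us \<longrightarrow> (us ! i, us ! Suc i) \<in> E) \<and>
     (\<forall>i. i + 2 < length us \<longrightarrow> us ! i \<noteq> us ! (i + 2))"

definition desc :: "('a \<times> 'a) set \<Rightarrow> 'a \<Rightarrow> 'a set" where
  "desc E u = {v. \<exists>us. is_arc E us \<and> hd us = u \<and> last us = v}"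

definition descs :: "('a \<times> 'a) set \<Rightarrow> 'a set \<Rightarrow> 'a set" where
  "descs E Y = (\<Union>y\<in>Y. desc E y)"

definition fin_gen :: "('a \<times> 'a) set \<Rightarrow> 'a set \<Rightarrow> bool" where
  "fin_gen E B \<longleftrightarrow> (\<exists>Z. finite Z \<and> B = descs E Z)"

definition dg_iso :: "('a \<times> 'a) set \<Rightarrow> 'a set \<Rightarrow> ('b \<times> 'b) set \<Rightarrow> 'b set \<Rightarrow> ('a \<Rightarrow> 'b) \<Rightarrow> bool" where
  "dg_iso E X E' Y f \<longleftrightarrow> bij_betw f X Y \<and>
     (\<forall>x\<in>X. \<forall>y\<in>X. (x, y) \<in> E \<longleftrightarrow> (f x, f y) \<in> E')"

definition independent :: "'a set \<Rightarrow> ('a \<times> 'a) set \<Rightarrow> 'a set \<Rightarrow> bool" where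
  "independent Vs E U \<longleftrightarrow> U \<subseteq> Vs \<and>
     (\<forall>x\<in>U. \<forall>y\<in>U. x \<noteq> y \<longrightarrow> desc E x \<inter> desc E y = {})"

definition common_pred :: "('a \<times> 'a) set \<Rightarrow> 'a set \<Rightarrow> 'a \<Rightarrow> bool" where
  "common_pred E X a \<longleftrightarrow> (\<forall>x\<in>X. (a, x) \<in> E)"

definition in_C :: "nat \<Rightarrow> 'a set \<Rightarrow> ('a \<times> 'a) set \<Rightarrow> bool" where
  "in_C q A E \<longleftrightarrow> E \<subseteq> A \<times> A \<and>
     (\<forall>a\<in>A. \<exists>g :: 'a \<Rightarrow> nat list. dg_iso E (desc E a) (T_edges q) (T_verts q) g) \<and>
     (\<exists>Z. finite Z \<and> Z \<subseteq> A \<and> A = descs E Z) \<and>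
     (\<forall>a\<in>A. \<forall>b\<in>A. fin_gen E (desc E a \<inter> desc E b))"

end

theory Submission
  imports Defs
begin



lemma arc_rtrancl:
  assumes "is_arc E us" shows "k < length us \<Longrightarrow> (hd us, us!k) \<in> E\<^sup>*"
proof (induction k)
  case 0 then show ?case using assms by (simp add: is_arc_def hd_conv_nth)
next
  case (Suc k)
  then have "(us!k, us!Suc k) \<in> E" using assms by (simp add: is_arc_def)
  with Suc show ?case by (meson Suc_lessD rtrancl.rtrancl_into_rtrancl)
qed

lemma rtrancl_arc:
  assumes nc: "\<And>x y. (x,y)\<in>E \<Longrightarrow> (y,x)\<notin>E"
  shows "(u,v)\<in>E\<^sup>* \<Longrightarrow> \<exists>us. is_arc E us \<and> hd us = u \<and> last us = v"
proof (induction rule: rtrancl_induct)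
  case base
  then show ?case by (rule exI[of _ "[u]"]) (simp add: is_arc_def)
next
  case (step y z)
  then obtain us where us: "is_arc E us" "hd us = u" "last us = y" by blast
  have ne: "us \<noteq> []" using us by (simp add: is_arc_def)
  have ly: "us ! (length us - 1) = y" using us ne by (simp add: last_conv_nth)
  have "is_arc E (us @ [z])"
    unfolding is_arc_def
  proof (intro conjI allI impI)
    show "us @ [z] \<noteq> []" by simp
  next
    fix i assume i: "Suc i < length (us @ [z])"
    show "((us @ [z]) ! i, (us @ [z]) ! Suc i) \<in> E"
    proof (cases "Suc i < length us")
      case True then show ?thesis using us(1) by (simp add: is_arc_def nth_append)
    next
      case False
      then have "i = length us - 1" using i by simp
      then show ?thesis using ly step(2) ne i False by (simp add: nth_append)
    qed
  next
    fix i assume i: "i + 2 < length (us @ [z])"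
    show "(us @ [z]) ! i \<noteq> (us @ [z]) ! (i + 2)"
    proof (cases "i + 2 < length us")
      case True then show ?thesis using us(1) by (simp add: is_arc_def nth_append)
    next
      case False
      then have ii: "i + 2 = length us" using i by simp
      have "(us ! i, us ! Suc i) \<in> E" using us(1) ii by (simp add: is_arc_def)
      moreover have "us ! Suc i = y" using ly ii by (metis add_2_eq_Suc' diff_Suc_1)
      ultimately have "(us!i, y) \<in> E" by simp
      then have "us ! i \<noteq> z" using nc step(2) by blast
      then show ?thesis using ii by (simp add: nth_append)
    qed
  qed
  then show ?case using us ne by (intro exI[of _ "us@[z]"]) simp
qed

lemma desc_eq_gen:
  assumes nc: "\<And>x y. (x,y)\<in>E \<Longrightarrow> (y,x)\<notin>E"
  shows "desc E u = E\<^sup>* `` {u}"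
proof
  show "desc E u \<subseteq> E\<^sup>* `` {u}"
  proof
    fix v assume "v \<in> desc E u"
    then obtain us where us: "is_arc E us" "hd us = u" "last us = v" by (auto simp: desc_def)
    then have ne: "us \<noteq> []" by (simp add: is_arc_def)
    have "(hd us, us ! (length us - 1)) \<in> E\<^sup>*" using arc_rtrancl[OF us(1)] ne by simp
    then show "v \<in> E\<^sup>* `` {u}" using us ne by (simp add: last_conv_nth)
  qed
next
  show "E\<^sup>* `` {u} \<subseteq> desc E u" using rtrancl_arc[OF nc] by (auto simp: desc_def)
qed




lemma T_edge: "(x,y) \<in> T_edges q \<longleftrightarrow> x \<in> T_verts q \<and> (\<exists>i<q. y = x @ [i])"
  by (auto simp: T_edges_def)

lemma T_nc: "(x,y) \<in> T_edges q \<Longrightarrow> (y,x) \<notin> T_edges q"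
  by (auto simp: T_edge)

lemma T_rt: "(x,y) \<in> (T_edges q)\<^sup>* \<Longrightarrow> \<exists>s. y = x @ s"
  by (induction rule: rtrancl_induct) (auto simp: T_edge)

lemma T_acyc: "(x,y) \<in> (T_edges q)\<^sup>* \<Longrightarrow> (y,x) \<in> (T_edges q)\<^sup>* \<Longrightarrow> x = y"
proof -
  assume a: "(x,y) \<in> (T_edges q)\<^sup>*" "(y,x) \<in> (T_edges q)\<^sup>*"
  obtain s where "y = x @ s" using T_rt[OF a(1)] by blast
  moreover obtain t where "x = y @ t" using T_rt[OF a(2)] by blast
  ultimately show ?thesis by simp
qed

lemma T_children: "b \<in> T_verts q \<Longrightarrow> {y. (b,y) \<in> T_edges q} = (\<lambda>i. b @ [i]) ` {..<q}"
  by (auto simp: T_edge)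

lemma T_children_card: "b \<in> T_verts q \<Longrightarrow> finite {y. (b,y) \<in> T_edges q} \<and> card {y. (b,y) \<in> T_edges q} = q"
  by (simp add: T_children card_image inj_on_def)

lemma T_parent: "(b,v) \<in> T_edges q \<Longrightarrow> (b',v) \<in> T_edges q \<Longrightarrow> b = b'"
  by (auto simp: T_edge)

lemma inC_sub: "in_C q A E \<Longrightarrow> E \<subseteq> A \<times> A" by (simp add: in_C_def)

lemma A_nc:
  assumes AC: "in_C q A E" and xy: "(x,y) \<in> E" shows "(y,x) \<notin> E"
proof
  assume yx: "(y,x) \<in> E"
  have xA: "x \<in> A" using xy inC_sub[OF AC] by auto
  then obtain g :: "_ \<Rightarrow> nat list" where g: "dg_iso E (desc E x) (T_edges q) (T_verts q) g"
    using AC unfolding in_C_def by blast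
  have "x \<in> desc E x" unfolding desc_def
    by (rule CollectI, rule exI[of _ "[x]"]) (simp add: is_arc_def)
  moreover have "y \<in> desc E x" unfolding desc_def
    by (rule CollectI, rule exI[of _ "[x,y]"]) (simp add: is_arc_def xy nth_Cons split: nat.splits)
  ultimately have "(g x, g y) \<in> T_edges q" "(g y, g x) \<in> T_edges q"
    using g xy yx unfolding dg_iso_def by blast+
  then show False using T_nc by blast
qed

lemma A_desc: "in_C q A E \<Longrightarrow> desc E u = E\<^sup>* `` {u}"
  by (rule desc_eq_gen) (rule A_nc)

lemma embed:
  assumes D: "D = E\<^sup>* `` {x}" and g: "\<forall>a\<in>D. \<forall>b\<in>D. (a,b) \<in> E \<longrightarrow> (g a, g b) \<in> T_edges q"
    and aD: "a \<in> D"
  shows "(a,b) \<in> E\<^sup>* \<Longrightarrow> b \<in> D \<and> (\<exists>s. g b = g a @ s)"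
proof (induction rule: rtrancl_induct)
  case base then show ?case using aD by simp
next
  case (step y z)
  then have zD: "z \<in> D" using D by (meson Image_singleton_iff rtrancl.rtrancl_into_rtrancl)
  then have "(g y, g z) \<in> T_edges q" using g step by blast
  then show ?case using step zD by (auto simp: T_edge)
qed

lemma A_acyc:
  assumes AC: "in_C q A E" and xy: "(x,y) \<in> E\<^sup>*" and yx: "(y,x) \<in> E\<^sup>*" shows "x = y"
proof (cases "x = y")
  case False
  then obtain z where "(x,z) \<in> E" using xy by (metis converse_rtranclE)
  then have xA: "x \<in> A" using inC_sub[OF AC] by auto
  then obtain g :: "_ \<Rightarrow> nat list" where g: "dg_iso E (desc E x) (T_edges q) (T_verts q) g"
    using AC unfolding in_C_def by blast
  define D where "D = E\<^sup>* `` {x}"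
  have g': "dg_iso E D (T_edges q) (T_verts q) g" using g A_desc[OF AC] D_def by simp
  have ge: "\<forall>a\<in>D. \<forall>b\<in>D. (a,b) \<in> E \<longrightarrow> (g a, g b) \<in> T_edges q" using g' by (simp add: dg_iso_def)
  have xD: "x \<in> D" by (simp add: D_def)
  obtain s where yD: "y \<in> D" and s: "g y = g x @ s" using embed[OF D_def ge xD xy] by blast
  obtain s' where s': "g x = g y @ s'" using embed[OF D_def ge yD yx] by blast
  have "g x = g y" using s s' by simp
  then show ?thesis using g' xD yD by (auto simp: dg_iso_def bij_betw_def inj_on_def)
qed simp

lemma A_children:
  assumes AC: "in_C q A E" and aA: "a \<in> A"
  shows "finite {y. (a,y) \<in> E} \<and> card {y. (a,y) \<in> E} \<le> q"
proof -
  obtain g :: "_ \<Rightarrow> nat list" where g: "dg_iso E (desc E a) (T_edges q) (T_verts q) g"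
    using AC aA unfolding in_C_def by blast
  define C where "C = {y. (a,y) \<in> E}"
  have aD: "a \<in> desc E a" "C \<subseteq> desc E a" using A_desc[OF AC] C_def by auto
  have inj: "inj_on g C" using g aD unfolding dg_iso_def bij_betw_def by (meson inj_on_subset)
  have "g ` C \<subseteq> (\<lambda>i. g a @ [i]) ` {..<q}"
  proof
    fix t assume "t \<in> g ` C"
    then obtain y where y: "y \<in> C" "t = g y" by blast
    then have "(g a, g y) \<in> T_edges q" using g aD C_def unfolding dg_iso_def by blast
    then show "t \<in> (\<lambda>i. g a @ [i]) ` {..<q}" using y by (auto simp: T_edge)
  qed
  moreover have "finite ((\<lambda>i. g a @ [i]) ` {..<q})" by simp
  moreover have "card ((\<lambda>i. g a @ [i]) ` {..<q}) \<le> q"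
    using card_image_le[of "{..<q}" "\<lambda>i. g a @ [i]"] by simp
  ultimately have fin: "finite (g ` C)" and cle: "card (g ` C) \<le> q"
    by (meson finite_subset, meson card_mono le_trans)
  have "finite C" using fin inj finite_imageD by blast
  moreover have "card C \<le> q" using cle card_image[OF inj] by simp
  ultimately show ?thesis by (simp add: C_def)
qed




locale forest =
  fixes E :: "('a \<times> 'a) set"
  assumes nc: "(x,y) \<in> E \<Longrightarrow> (y,x) \<notin> E"
    and acyc: "(x,y) \<in> E\<^sup>* \<Longrightarrow> (y,x) \<in> E\<^sup>* \<Longrightarrow> x = y"
begin

lemma desc_eq: "desc E u = E\<^sup>* `` {u}"
  by (rule desc_eq_gen) (rule nc)

lemma descs_eq: "descs E U = E\<^sup>* `` U"
  by (auto simp: descs_def desc_eq)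

lemma loopfree: "(x,x) \<notin> E" using nc by blast

lemma indep_eq: "independent Vs E U \<longleftrightarrow> U \<subseteq> Vs \<and>
   (\<forall>x\<in>U. \<forall>y\<in>U. x \<noteq> y \<longrightarrow> (\<forall>z. (x,z) \<in> E\<^sup>* \<longrightarrow> (y,z) \<notin> E\<^sup>*))"
  by (auto simp: independent_def desc_eq)

lemma not_pred:
  assumes ind: "independent Vs E U" and p: "p \<subseteq> U" "p \<noteq> {}" and cp: "common_pred E p a"
  shows "a \<notin> descs E U"
proof
  assume "a \<in> descs E U"
  then obtain v where v: "v \<in> U" "(v,a) \<in> E\<^sup>*" by (auto simp: descs_eq)
  obtain u where u: "u \<in> p" using p by blast
  then have au: "(a,u) \<in> E" using cp by (simp add: common_pred_def)
  then have vu: "(v,u) \<in> E\<^sup>*" using v by simp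
  show False
  proof (cases "u = v")
    case True
    then have "a = u" using acyc v(2) au by blast
    then show False using au loopfree by simp
  next
    case False
    then show False using ind vu v u p unfolding indep_eq by blast
  qed
qed

lemma root:
  assumes ind: "independent Vs E U" and u: "u \<in> U" and z: "z \<in> descs E U"
  shows "(z,u) \<notin> E"
proof
  assume zu: "(z,u) \<in> E"
  obtain v where v: "v \<in> U" "(v,z) \<in> E\<^sup>*" using z by (auto simp: descs_eq)
  then have vu: "(v,u) \<in> E\<^sup>*" using zu by simp
  show False
  proof (cases "u = v")
    case True
    then have "z = u" using acyc v(2) zu by blast
    then show False using zu loopfree by simp
  next
    case False
    then show False using ind vu v u unfolding indep_eq by blast
  qed
qed

lemma nonroot:
  assumes x: "x \<in> descs E U" "x \<notin> U" shows "\<exists>z\<in>descs E U. (z,x) \<in> E"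
proof -
  obtain u where u: "u \<in> U" "(u,x) \<in> E\<^sup>*" using x by (auto simp: descs_eq)
  then have "u \<noteq> x" using x by blast
  then obtain z where "(u,z) \<in> E\<^sup>*" "(z,x) \<in> E" using u(2) by (metis rtranclE)
  then show ?thesis using u by (auto simp: descs_eq)
qed

lemma desc_children: "E\<^sup>* `` {a} = insert a (E\<^sup>* `` {y. (a,y) \<in> E})"
  by (auto elim: converse_rtranclE intro: converse_rtrancl_into_rtrancl)

lemma merge:
  assumes ind: "independent Vs E U"
    and PU: "\<forall>j\<in>J. P j \<subseteq> U \<and> P j \<noteq> {}"
    and disj: "\<forall>j\<in>J. \<forall>j'\<in>J. j \<noteq> j' \<longrightarrow> P j \<inter> P j' = {}"
    and wV: "\<forall>j\<in>J. w j \<in> Vs"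
    and ch: "\<forall>j\<in>J. {y. (w j, y) \<in> E} = P j"
  shows "independent Vs E ((U - (\<Union>j\<in>J. P j)) \<union> w ` J)"
    and "descs E ((U - (\<Union>j\<in>J. P j)) \<union> w ` J) = descs E U \<union> w ` J"
    and "w ` J \<inter> descs E U = {}"
    and "\<forall>I. I \<subseteq> Vs \<and> I \<inter> U = {} \<and> independent Vs E (U \<union> I)
            \<longrightarrow> independent Vs E ((U - (\<Union>j\<in>J. P j)) \<union> w ` J \<union> I)"
proof -
  have cp: "\<forall>j\<in>J. common_pred E (P j) (w j)" using ch by (auto simp: common_pred_def)
  have nw: "\<forall>j\<in>J. w j \<notin> E\<^sup>* `` U" 
  proof
    fix j assume j: "j \<in> J"
    show "w j \<notin> E\<^sup>* `` U" using not_pred[OF ind, of "P j" "w j"] PU cp j unfolding descs_eq by blast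
  qed
  have dw: "\<forall>j\<in>J. E\<^sup>* `` {w j} = insert (w j) (E\<^sup>* `` P j)"
  proof
    fix j assume j: "j \<in> J"
    show "E\<^sup>* `` {w j} = insert (w j) (E\<^sup>* `` P j)" using desc_children[of "w j"] ch j by simp
  qed
  have UV: "U \<subseteq> Vs" and iU: "\<forall>x\<in>U. \<forall>y\<in>U. x \<noteq> y \<longrightarrow> (\<forall>z. (x,z) \<in> E\<^sup>* \<longrightarrow> (y,z) \<notin> E\<^sup>*)"
    using ind by (auto simp: indep_eq)
  show "w ` J \<inter> descs E U = {}" using nw by (auto simp: descs_eq)
  show "descs E ((U - (\<Union>j\<in>J. P j)) \<union> w ` J) = descs E U \<union> w ` J"
  proof -
    have "E\<^sup>* `` ((U - (\<Union>j\<in>J. P j)) \<union> w ` J) = E\<^sup>* `` (U - (\<Union>j\<in>J. P j)) \<union> (\<Union>j\<in>J. E\<^sup>* `` {w j})"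
      by blast
    also have "\<dots> = E\<^sup>* `` (U - (\<Union>j\<in>J. P j)) \<union> (\<Union>j\<in>J. insert (w j) (E\<^sup>* `` P j))"
      using dw by simp
    also have "\<dots> = E\<^sup>* `` U \<union> w ` J"
    proof
      show "E\<^sup>* `` (U - (\<Union>j\<in>J. P j)) \<union> (\<Union>j\<in>J. insert (w j) (E\<^sup>* `` P j)) \<subseteq> E\<^sup>* `` U \<union> w ` J"
        using PU by blast
    next
      show "E\<^sup>* `` U \<union> w ` J \<subseteq> E\<^sup>* `` (U - (\<Union>j\<in>J. P j)) \<union> (\<Union>j\<in>J. insert (w j) (E\<^sup>* `` P j))"
      proof
        fix z assume "z \<in> E\<^sup>* `` U \<union> w ` J"
        then show "z \<in> E\<^sup>* `` (U - (\<Union>j\<in>J. P j)) \<union> (\<Union>j\<in>J. insert (w j) (E\<^sup>* `` P j))"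
        proof
          assume "z \<in> E\<^sup>* `` U"
          then obtain u where u: "u \<in> U" "(u,z) \<in> E\<^sup>*" by blast
          show ?thesis
          proof (cases "\<exists>j\<in>J. u \<in> P j")
            case True then show ?thesis using u by blast
          next
            case False then show ?thesis using u by blast
          qed
        qed blast
      qed
    qed
    finally show ?thesis by (simp add: descs_eq)
  qed
  show "independent Vs E ((U - (\<Union>j\<in>J. P j)) \<union> w ` J)"
    unfolding indep_eq
  proof (intro conjI ballI impI allI)
    show "U - (\<Union>j\<in>J. P j) \<union> w ` J \<subseteq> Vs" using UV wV by blast
  next
    fix x y z
    assume x: "x \<in> U - (\<Union>j\<in>J. P j) \<union> w ` J" and y: "y \<in> U - (\<Union>j\<in>J. P j) \<union> w ` J"
      and xy: "x \<noteq> y" and xz: "(x,z) \<in> E\<^sup>*"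
    show "(y,z) \<notin> E\<^sup>*"
    proof
      assume yz: "(y,z) \<in> E\<^sup>*"
      have key: "False" if a: "a \<in> U - (\<Union>j\<in>J. P j)" and j: "j \<in> J" and az: "(a,z) \<in> E\<^sup>*"
         and bz: "(w j, z) \<in> E\<^sup>*" for a j
      proof -
        have "z \<in> insert (w j) (E\<^sup>* `` P j)" using dw j bz by blast
        then show False
        proof
          assume "z = w j" then show False using nw j az a by blast
        next
          assume "z \<in> E\<^sup>* `` P j"
          then obtain u where "u \<in> P j" "(u,z) \<in> E\<^sup>*" by blast
          then show False using iU a j az PU by blast
        qed
      qed
      show False
      proof (cases "x \<in> w ` J")
        case True
        then obtain j where j: "j \<in> J" "x = w j" by blast
        show False
        proof (cases "y \<in> w ` J")
          case True
          then obtain j' where j': "j' \<in> J" "y = w j'" by blast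
          have jj: "j \<noteq> j'" using xy j j' by blast
          have z1: "z = w j \<or> z \<in> E\<^sup>* `` P j" using dw j xz by blast
          have z2: "z = w j' \<or> z \<in> E\<^sup>* `` P j'" using dw j' yz by blast
          have a1: "w j \<notin> E\<^sup>* `` P j'" using nw j j' PU by blast
          have a2: "w j' \<notin> E\<^sup>* `` P j" using nw j j' PU by blast
          show False
          proof (cases "z = w j")
            case True
            then show False using z2 a1 xy j j' by auto
          next
            case False
            then obtain u where u: "u \<in> P j" "(u,z) \<in> E\<^sup>*" using z1 by blast
            show False
            proof (cases "z = w j'")
              case True then show False using a2 u by blast
            next
              case False
              then obtain u' where u': "u' \<in> P j'" "(u',z) \<in> E\<^sup>*" using z2 by blast
              have "u \<noteq> u'" using disj j j' jj u u' by blast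
              moreover have "u \<in> U" "u' \<in> U" using PU j j' u u' by blast+
              ultimately show False using iU u u' by blast
            qed
          qed
        next
          case False
          then show False using key y j xz yz by blast
        qed
      next
        case False
        then have xU: "x \<in> U - (\<Union>j\<in>J. P j)" using x by blast
        show False
        proof (cases "y \<in> w ` J")
          case True
          then show False using key xU xz yz by blast
        next
          case False
          then have "y \<in> U" using y by blast
          then show False using iU[rule_format, of x y z] xU xy xz yz by blast
        qed
      qed
    qed
  qed
  show "\<forall>I. I \<subseteq> Vs \<and> I \<inter> U = {} \<and> independent Vs E (U \<union> I)
            \<longrightarrow> independent Vs E ((U - (\<Union>j\<in>J. P j)) \<union> w ` J \<union> I)"
  proof (intro allI impI)
    fix I assume I: "I \<subseteq> Vs \<and> I \<inter> U = {} \<and> independent Vs E (U \<union> I)"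
    have iUI: "\<forall>x\<in>U \<union> I. \<forall>y\<in>U \<union> I. x \<noteq> y \<longrightarrow> (\<forall>z. (x,z) \<in> E\<^sup>* \<longrightarrow> (y,z) \<notin> E\<^sup>*)"
      using I by (simp add: indep_eq)
    have base: "independent Vs E ((U - (\<Union>j\<in>J. P j)) \<union> w ` J)" by fact
    have keyI: "False" if i: "i \<in> I" and j: "j \<in> J" and iz: "(i,z) \<in> E\<^sup>*"
         and bz: "(w j, z) \<in> E\<^sup>*" and ne: "i \<noteq> w j" for i j z
    proof -
      have z: "z \<in> insert (w j) (E\<^sup>* `` P j)" using dw j bz by blast
      obtain u0 where u0: "u0 \<in> P j" using PU j by blast
      have iu: "\<And>u. u \<in> P j \<Longrightarrow> i \<noteq> u" using I PU j i by blast
      from z show False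
      proof
        assume "z = w j"
        then have "(i, u0) \<in> E\<^sup>*" using iz u0 ch j by (auto intro: rtrancl_into_rtrancl)
        then show False using iUI i u0 iu PU j by blast
      next
        assume "z \<in> E\<^sup>* `` P j"
        then obtain u where "u \<in> P j" "(u,z) \<in> E\<^sup>*" by blast
        then show False using iUI iz i iu PU j by blast
      qed
    qed
    show "independent Vs E ((U - (\<Union>j\<in>J. P j)) \<union> w ` J \<union> I)"
      unfolding indep_eq
    proof (intro conjI ballI impI allI)
      show "U - (\<Union>j\<in>J. P j) \<union> w ` J \<union> I \<subseteq> Vs" using UV wV I by blast
    next
      fix x y z
      assume x: "x \<in> U - (\<Union>j\<in>J. P j) \<union> w ` J \<union> I" and y: "y \<in> U - (\<Union>j\<in>J. P j) \<union> w ` J \<union> I"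
        and xy: "x \<noteq> y" and xz: "(x,z) \<in> E\<^sup>*"
      show "(y,z) \<notin> E\<^sup>*"
      proof
        assume yz: "(y,z) \<in> E\<^sup>*"
        have b: "\<forall>x\<in>U - (\<Union>j\<in>J. P j) \<union> w ` J. \<forall>y\<in>U - (\<Union>j\<in>J. P j) \<union> w ` J. x \<noteq> y \<longrightarrow> (\<forall>z. (x,z) \<in> E\<^sup>* \<longrightarrow> (y,z) \<notin> E\<^sup>*)"
          using base by (simp add: indep_eq)
        show False
        proof (cases "x \<in> I")
          case xI: True
          show False
          proof (cases "y \<in> I")
            case True then show False using iUI xI xy xz yz by blast
          next
            case False
            then have "y \<in> U - (\<Union>j\<in>J. P j) \<or> y \<in> w ` J" using y by blast
            then show False
            proof
              assume "y \<in> U - (\<Union>j\<in>J. P j)" then show False using iUI xI xy xz yz by blast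
            next
              assume "y \<in> w ` J" then show False using keyI xI xz yz xy by blast
            qed
          qed
        next
          case xnI: False
          show False
          proof (cases "y \<in> I")
            case yI: True
            have "x \<in> U - (\<Union>j\<in>J. P j) \<or> x \<in> w ` J" using x xnI by blast
            then show False
            proof
              assume "x \<in> U - (\<Union>j\<in>J. P j)" then show False using iUI yI xy xz yz by blast
            next
              assume "x \<in> w ` J" then show False using keyI yI xz yz xy by blast
            qed
          next
            case False
            then have "x \<in> U - (\<Union>j\<in>J. P j) \<union> w ` J" "y \<in> U - (\<Union>j\<in>J. P j) \<union> w ` J"
              using x y xnI by blast+
            then show False using b[rule_format, of x y z] xy xz yz by blast
          qed
        qed
      qed
    qed
  qed
qed

end

lemma forest_T: "forest (T_edges q)"
proof
  fix x y :: "nat list"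
  show "(x,y) \<in> T_edges q \<Longrightarrow> (y,x) \<notin> T_edges q" by (rule T_nc)
  show "(x,y) \<in> (T_edges q)\<^sup>* \<Longrightarrow> (y,x) \<in> (T_edges q)\<^sup>* \<Longrightarrow> x = y" by (rule T_acyc)
qed

lemma forest_A: assumes AC: "in_C q A E" shows "forest E"
proof
  fix x y
  show "(x,y) \<in> E \<Longrightarrow> (y,x) \<notin> E" by (rule A_nc[OF AC])
  show "(x,y) \<in> E\<^sup>* \<Longrightarrow> (y,x) \<in> E\<^sup>* \<Longrightarrow> x = y" by (rule A_acyc[OF AC])
qed




theorem lemma3p2:
  fixes q :: nat and A :: "'a set" and E :: "('a \<times> 'a) set"
    and U U' :: "'a set" and V V' :: "nat list set" and f :: "'a \<Rightarrow> nat list"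
    and Q :: "'a set set" and w :: "'a set \<Rightarrow> 'a" and wT :: "'a set \<Rightarrow> nat list"
  assumes q2: "q \<ge> 2"
    and AC: "in_C q A E"
    and indU: "independent A E U"
    and indV: "independent (T_verts q) (T_edges q) V"
    and iso: "dg_iso E (descs E U) (T_edges q) (descs (T_edges q) V) f"
    and Q_def: "Q = {p. p \<subseteq> U \<and> card p = q \<and> (\<exists>a\<in>A. common_pred E p a)
                      \<and> (\<exists>b\<in>T_verts q. common_pred (T_edges q) (f ` p) b)}"
    and w: "\<forall>p\<in>Q. w p \<in> A \<and> common_pred E p (w p)"
    and wT: "\<forall>p\<in>Q. wT p \<in> T_verts q \<and> common_pred (T_edges q) (f ` p) (wT p)"
    and U'_def: "U' = (U - \<Union>Q) \<union> w ` Q"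
    and V'_def: "V' = (V - (\<Union>p\<in>Q. f ` p)) \<union> wT ` Q"
  shows "independent A E U' \<and> independent (T_verts q) (T_edges q) V'
     \<and> (\<exists>F. (\<forall>x\<in>descs E U. F x = f x) \<and> (\<forall>p\<in>Q. F (w p) = wT p))
     \<and> (\<forall>F. (\<forall>x\<in>descs E U. F x = f x) \<and> (\<forall>p\<in>Q. F (w p) = wT p)
            \<longrightarrow> dg_iso E (descs E U') (T_edges q) (descs (T_edges q) V') F)
     \<and> (\<forall>I. I \<subseteq> A \<and> I \<inter> U = {} \<and> independent A E (U \<union> I)
            \<longrightarrow> independent A E (U' \<union> I))"
proof -
  let ?T = "T_edges q"
  interpret FA: forest E by (rule forest_A[OF AC])
  interpret FT: forest ?T by (rule forest_T)
  have bij: "bij_betw f (descs E U) (descs ?T V)" and ed: "\<forall>x\<in>descs E U. \<forall>y\<in>descs E U. (x,y) \<in> E \<longleftrightarrow> (f x, f y) \<in> ?T"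
    using iso by (auto simp: dg_iso_def)
  have inj: "inj_on f (descs E U)" and img: "f ` descs E U = descs ?T V" using bij by (auto simp: bij_betw_def)
  have UdU: "U \<subseteq> descs E U" by (auto simp: FA.descs_eq)
  have pU: "\<forall>p\<in>Q. p \<subseteq> U" using Q_def by blast
  have pcard: "\<forall>p\<in>Q. card p = q" using Q_def by blast
  have pne: "\<forall>p\<in>Q. p \<noteq> {} \<and> finite p" using pcard q2 by (metis card.empty card.infinite not_numeral_le_zero)
  have fU: "\<forall>u\<in>U. f u \<in> V"
  proof
    fix u assume u: "u \<in> U"
    then have fu: "f u \<in> descs ?T V" using img UdU by blast
    show "f u \<in> V"
    proof (rule ccontr)
      assume "f u \<notin> V"
      then obtain z' where z': "z' \<in> descs ?T V" "(z', f u) \<in> ?T" using FT.nonroot fu by blast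
      then obtain z where z: "z \<in> descs E U" "z' = f z" using img by blast
      then have "(z,u) \<in> E" using ed z' u UdU by blast
      then show False using FA.root[OF indU u z(1)] by blast
    qed
  qed
  have chA: "\<forall>p\<in>Q. {y. (w p, y) \<in> E} = p"
  proof
    fix p assume p: "p \<in> Q"
    have wpA: "w p \<in> A" using w p by blast
    have fc: "finite {y. (w p, y) \<in> E} \<and> card {y. (w p, y) \<in> E} \<le> q" by (rule A_children[OF AC wpA])
    have sub: "p \<subseteq> {y. (w p, y) \<in> E}" using w p by (auto simp: common_pred_def)
    have cp: "card p = q" using pcard p by blast
    have "card {y. (w p, y) \<in> E} \<le> card p" using fc cp by simp
    then have "p = {y. (w p, y) \<in> E}" using card_seteq[OF conjunct1[OF fc] sub] by blast
    then show "{y. (w p, y) \<in> E} = p" by simp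
  qed
  have chT: "\<forall>p\<in>Q. {y. (wT p, y) \<in> ?T} = f ` p"
  proof
    fix p assume p: "p \<in> Q"
    have wpT: "wT p \<in> T_verts q" using wT p by blast
    have fc: "finite {y. (wT p, y) \<in> ?T} \<and> card {y. (wT p, y) \<in> ?T} = q" by (rule T_children_card[OF wpT])
    have sub: "f ` p \<subseteq> {y. (wT p, y) \<in> ?T}" using wT p by (auto simp: common_pred_def)
    have cq: "card (f ` p) = q"
    proof -
      have "p \<subseteq> descs E U" using pU UdU p by blast
      then have "inj_on f p" using inj_on_subset[OF inj] by blast
      then have "card (f ` p) = card p" by (rule card_image)
      then show ?thesis using pcard p by simp
    qed
    have "card {y. (wT p, y) \<in> ?T} \<le> card (f ` p)" using fc cq by simp
    then have "f ` p = {y. (wT p, y) \<in> ?T}" using card_seteq[OF conjunct1[OF fc] sub] by blast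
    then show "{y. (wT p, y) \<in> ?T} = f ` p" by simp
  qed
  have fimg: "\<And>p p'. p \<in> Q \<Longrightarrow> p' \<in> Q \<Longrightarrow> f ` p = f ` p' \<Longrightarrow> p = p'"
    using inj pU UdU by (meson inj_on_image_eq_iff subset_trans)
  have disjQ: "\<forall>p\<in>Q. \<forall>p'\<in>Q. p \<noteq> p' \<longrightarrow> p \<inter> p' = {}"
  proof (intro ballI impI)
    fix p p' assume p: "p \<in> Q" "p' \<in> Q" "p \<noteq> p'"
    show "p \<inter> p' = {}"
    proof (rule ccontr)
      assume "p \<inter> p' \<noteq> {}"
      then obtain u where u: "u \<in> p" "u \<in> p'" by blast
      have "(wT p, f u) \<in> ?T" "(wT p', f u) \<in> ?T" using chT p u by blast+
      then have "wT p = wT p'" using T_parent by blast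
      then have "f ` p = f ` p'" using chT p by metis
      then show False using fimg p by blast
    qed
  qed
  have disjQT: "\<forall>p\<in>Q. \<forall>p'\<in>Q. p \<noteq> p' \<longrightarrow> f ` p \<inter> f ` p' = {}"
  proof (intro ballI impI)
    fix p p' assume p: "p \<in> Q" "p' \<in> Q" "p \<noteq> p'"
    have "inj_on f (p \<union> p')" using inj pU UdU p by (meson inj_on_subset le_sup_iff subset_trans)
    then have "f ` p \<inter> f ` p' = f ` (p \<inter> p')" by (simp add: inj_on_image_Int)
    then show "f ` p \<inter> f ` p' = {}" using disjQ p by simp
  qed
  have winj: "inj_on w Q"
  proof (rule inj_onI)
    fix p p' assume "p \<in> Q" "p' \<in> Q" "w p = w p'"
    then show "p = p'" using chA by metis
  qed
  have wTinj: "inj_on wT Q"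
  proof (rule inj_onI)
    fix p p' assume pp: "p \<in> Q" "p' \<in> Q" "wT p = wT p'"
    then have "f ` p = f ` p'" using chT by metis
    then show "p = p'" using fimg pp by blast
  qed
  have PA: "\<forall>j\<in>Q. j \<subseteq> U \<and> j \<noteq> {}" using pU pne by simp
  have wA: "\<forall>j\<in>Q. w j \<in> A" using w by blast
  note mA = FA.merge[of A U Q "\<lambda>p. p" w, OF indU PA disjQ wA chA]
  have mA1: "independent A E ((U - (\<Union>j\<in>Q. j)) \<union> w ` Q)" using mA(1) by simp
  have mA2: "descs E ((U - (\<Union>j\<in>Q. j)) \<union> w ` Q) = descs E U \<union> w ` Q" using mA(2) by simp
  have mA3: "w ` Q \<inter> descs E U = {}" using mA(3) by simp
  have mA4: "\<forall>I. I \<subseteq> A \<and> I \<inter> U = {} \<and> independent A E (U \<union> I)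
            \<longrightarrow> independent A E ((U - (\<Union>j\<in>Q. j)) \<union> w ` Q \<union> I)" using mA(4) by simp
  have PT: "\<forall>j\<in>Q. f ` j \<subseteq> V \<and> f ` j \<noteq> {}"
  proof
    fix j assume j: "j \<in> Q"
    then have "j \<subseteq> U" "j \<noteq> {}" using pU pne by auto
    then show "f ` j \<subseteq> V \<and> f ` j \<noteq> {}" using fU by blast
  qed
  have wTV: "\<forall>j\<in>Q. wT j \<in> T_verts q" using wT by blast
  note mT = FT.merge[of "T_verts q" V Q "\<lambda>p. f ` p" wT, OF indV PT disjQT wTV chT]
  have mT1: "independent (T_verts q) ?T ((V - (\<Union>j\<in>Q. f ` j)) \<union> wT ` Q)" using mT(1) by simp
  have mT2: "descs ?T ((V - (\<Union>j\<in>Q. f ` j)) \<union> wT ` Q) = descs ?T V \<union> wT ` Q" using mT(2) by simp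
  have mT3: "wT ` Q \<inter> descs ?T V = {}" using mT(3) by simp
  have U': "U' = (U - (\<Union>j\<in>Q. j)) \<union> w ` Q" using U'_def by simp
  have dU': "descs E U' = descs E U \<union> w ` Q" using mA2 U' by simp
  have dV': "descs ?T V' = descs ?T V \<union> wT ` Q" using mT2 V'_def by simp
  have ex: "\<exists>F. (\<forall>x\<in>descs E U. F x = f x) \<and> (\<forall>p\<in>Q. F (w p) = wT p)"
  proof (intro exI conjI ballI)
    fix x assume "x \<in> descs E U"
    then show "(\<lambda>x. if x \<in> descs E U then f x else wT (inv_into Q w x)) x = f x" by simp
  next
    fix p assume p: "p \<in> Q"
    then have "w p \<notin> descs E U" using mA3 by blast
    then show "(\<lambda>x. if x \<in> descs E U then f x else wT (inv_into Q w x)) (w p) = wT p"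
      using p winj by simp
  qed
  have isoF: "dg_iso E (descs E U') ?T (descs ?T V') F"
    if F: "(\<forall>x\<in>descs E U. F x = f x) \<and> (\<forall>p\<in>Q. F (w p) = wT p)" for F
  proof -
    have Fimg: "F ` (descs E U \<union> w ` Q) = descs ?T V \<union> wT ` Q"
    proof -
      have 1: "F ` descs E U = f ` descs E U" by (rule image_cong[OF refl]) (use F in blast)
      have "F ` (w ` Q) = (\<lambda>p. F (w p)) ` Q" by (simp add: image_image)
      also have "\<dots> = wT ` Q" by (rule image_cong[OF refl]) (use F in blast)
      finally have 2: "F ` (w ` Q) = wT ` Q" .
      show ?thesis unfolding image_Un 1 2 img ..
    qed
    have Fd: "\<And>x. x \<in> descs E U \<Longrightarrow> F x = f x" using F by blast
    have Fw: "\<And>p. p \<in> Q \<Longrightarrow> F (w p) = wT p" using F by blast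
    have FdV: "\<And>x. x \<in> descs E U \<Longrightarrow> F x \<in> descs ?T V"
    proof -
      fix x assume x: "x \<in> descs E U"
      then have "f x \<in> f ` descs E U" by (rule imageI)
      then show "F x \<in> descs ?T V" using img Fd[OF x] by simp
    qed
    have wTn: "\<And>p. p \<in> Q \<Longrightarrow> wT p \<notin> descs ?T V" using mT3 by blast
    have Finj: "inj_on F (descs E U \<union> w ` Q)"
    proof (rule inj_onI)
      fix x y assume x: "x \<in> descs E U \<union> w ` Q" and y: "y \<in> descs E U \<union> w ` Q" and e: "F x = F y"
      show "x = y"
      proof (cases "x \<in> descs E U")
        case xd: True
        show ?thesis
        proof (cases "y \<in> descs E U")
          case yd: True
          have "f x = f y" using e Fd[OF xd] Fd[OF yd] by simp
          then show ?thesis using inj_onD[OF inj _ xd yd] by blast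
        next
          case False
          then obtain p where p: "p \<in> Q" "y = w p" using y by blast
          have "F y = wT p" using Fw[OF p(1)] p(2) by simp
          then show ?thesis using FdV[OF xd] wTn[OF p(1)] e by simp
        qed
      next
        case xn: False
        then obtain p where p: "p \<in> Q" "x = w p" using x by blast
        have Fx: "F x = wT p" using Fw[OF p(1)] p(2) by simp
        show ?thesis
        proof (cases "y \<in> descs E U")
          case True
          then show ?thesis using FdV[OF True] wTn[OF p(1)] e Fx by simp
        next
          case False
          then obtain p' where p': "p' \<in> Q" "y = w p'" using y by blast
          have "wT p = wT p'" using Fx Fw[OF p'(1)] p'(2) e by simp
          then have "p = p'" using wTinj p(1) p'(1) by (meson inj_onD)
          then show ?thesis using p p' by simp
        qed
      qed
    qed
    have clA: "\<And>x y. x \<in> descs E U \<Longrightarrow> (x,y) \<in> E \<Longrightarrow> y \<in> descs E U"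
      by (auto simp: FA.descs_eq intro: rtrancl_into_rtrancl)
    have clT: "\<And>x y. x \<in> descs ?T V \<Longrightarrow> (x,y) \<in> ?T \<Longrightarrow> y \<in> descs ?T V"
      by (auto simp: FT.descs_eq intro: rtrancl_into_rtrancl)
    have VdV: "V \<subseteq> descs ?T V" by (auto simp: FT.descs_eq)
    have Fed: "(x,y) \<in> E \<longleftrightarrow> (F x, F y) \<in> ?T"
      if x: "x \<in> descs E U \<union> w ` Q" and y: "y \<in> descs E U \<union> w ` Q" for x y
    proof (cases "x \<in> descs E U")
      case xd: True
      show ?thesis
      proof (cases "y \<in> descs E U")
        case yd: True
        have "(x,y) \<in> E \<longleftrightarrow> (f x, f y) \<in> ?T" using ed xd yd by simp
        then show ?thesis using Fd[OF xd] Fd[OF yd] by simp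
      next
        case False
        then obtain p where p: "p \<in> Q" "y = w p" using y by blast
        have "(x,y) \<notin> E" using clA[OF xd] False by blast
        moreover have "(F x, F y) \<notin> ?T"
        proof
          assume "(F x, F y) \<in> ?T"
          then have "F y \<in> descs ?T V" using clT[OF FdV[OF xd]] by blast
          then show False using Fw[OF p(1)] p(2) wTn[OF p(1)] by simp
        qed
        ultimately show ?thesis by simp
      qed
    next
      case xn: False
      then obtain p where p: "p \<in> Q" "x = w p" using x by blast
      have Fx: "F x = wT p" using Fw[OF p(1)] p(2) by simp
      show ?thesis
      proof (cases "y \<in> descs E U")
        case yd: True
        have pd: "p \<subseteq> descs E U" using pU p(1) UdU by blast
        have cA: "\<forall>z. (w p, z) \<in> E \<longleftrightarrow> z \<in> p" using chA p(1) by (simp add: set_eq_iff)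
        have "(x,y) \<in> E \<longleftrightarrow> y \<in> p" using cA p(2) by simp
        also have "\<dots> \<longleftrightarrow> f y \<in> f ` p" using inj_on_image_mem_iff[OF inj yd pd] by simp
        also have "\<dots> \<longleftrightarrow> (wT p, f y) \<in> ?T"
        proof -
          have "\<forall>z. (wT p, z) \<in> ?T \<longleftrightarrow> z \<in> f ` p" using chT p(1) by (simp add: set_eq_iff)
          then show ?thesis by simp
        qed
        also have "\<dots> \<longleftrightarrow> (F x, F y) \<in> ?T" using Fx Fd[OF yd] by simp
        finally show ?thesis .
      next
        case False
        then obtain p' where p': "p' \<in> Q" "y = w p'" using y by blast
        have "(x,y) \<notin> E"
        proof
          assume "(x,y) \<in> E"
          moreover have "\<forall>z. (w p, z) \<in> E \<longleftrightarrow> z \<in> p" using chA p(1) by (simp add: set_eq_iff)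
          ultimately have "w p' \<in> p" using p p' by simp
          then have "w p' \<in> descs E U" using pU p(1) UdU by blast
          then show False using mA3 p'(1) by blast
        qed
        moreover have "(F x, F y) \<notin> ?T"
        proof
          assume "(F x, F y) \<in> ?T"
          then have "(wT p, wT p') \<in> ?T" using Fx Fw[OF p'(1)] p'(2) by simp
          moreover have "\<forall>z. (wT p, z) \<in> ?T \<longleftrightarrow> z \<in> f ` p" using chT p(1) by (simp add: set_eq_iff)
          ultimately have "wT p' \<in> f ` p" by simp
          then obtain u where u: "u \<in> p" "wT p' = f u" by blast
          have "u \<in> U" using u(1) pU p(1) by blast
          then have "wT p' \<in> V" using fU u(2) by simp
          then have "wT p' \<in> descs ?T V" using VdV by blast
          then show False using wTn[OF p'(1)] by blast
        qed
        ultimately show ?thesis by simp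
      qed
    qed
    show ?thesis unfolding dg_iso_def dU' dV'
      using Fimg Finj Fed by (simp add: bij_betw_def)
  qed
  have partb: "\<forall>I. I \<subseteq> A \<and> I \<inter> U = {} \<and> independent A E (U \<union> I)
            \<longrightarrow> independent A E (U' \<union> I)" using mA4 U' by simp
  show ?thesis using mA1 U' mT1 V'_def ex isoF partb by simp
qed


end
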